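(* For a fixed typed DAG task $G=(V,E,\gamma,c)$, the quantity \[ B_1(M)=len(\hat G)+\sum_{s\in S}\frac{vol_s(G)}{M_s} \] is non-increasing in each $M_s$ (with the other $M_{s'}$ fixed), i.e., increasing the number of cores of any type never increases this bound.
   Context: A typed DAG task is $G=(V,E,\gamma,c)$ where $(V,E)$ is a finite directed acyclic graph with a unique source and a unique sink, $S$ is a finite set of core types, $\gamma:V\to S$ gives the type of each vertex, and $c:V\to\mathbb{R}_{\ge0}$ gives the WCET of each vertex. The platform has $M_s\ge1$ cores of type $s$, $M=(M_s)_{s\in S}$. $vol_s(G)=\sum_{u\in V,\gamma(u)=s}c(u)$. The scaled graph $\hat G$ has the same vertices, edges and types as $G$ with weights $\hat c(v)=c(v)(1-1/M_{\gamma(v)})$, and $len(\hat G)$ is its longest path length with respect to $\hat c$ (which depends on $M$). *)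

theory Defs
  imports Main "HOL-Library.Multiset" Complex_Main
begin

definition is_source :: "'v set \<Rightarrow> ('v \<times> 'v) set \<Rightarrow> 'v \<Rightarrow> bool" where
  "is_source V E v \<longleftrightarrow> v \<in> V \<and> (\<forall>u. (u, v) \<notin> E)"

definition is_sink :: "'v set \<Rightarrow> ('v \<times> 'v) set \<Rightarrow> 'v \<Rightarrow> bool" where
  "is_sink V E v \<longleftrightarrow> v \<in> V \<and> (\<forall>u. (v, u) \<notin> E)"

definition typed_dag_task ::
  "'v set \<Rightarrow> ('v \<times> 'v) set \<Rightarrow> 's set \<Rightarrow> ('v \<Rightarrow> 's) \<Rightarrow> ('v \<Rightarrow> real) \<Rightarrow> bool" where
  "typed_dag_task V E S \<gamma> c \<longleftrightarrow>
     finite V \<and> E \<subseteq> V \<times> V \<and> acyclic E \<and>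
     (\<exists>!v. is_source V E v) \<and> (\<exists>!v. is_sink V E v) \<and>
     finite S \<and> (\<forall>v\<in>V. \<gamma> v \<in> S) \<and> (\<forall>v\<in>V. c v \<ge> 0)"

definition valid_platform :: "'s set \<Rightarrow> ('s \<Rightarrow> nat) \<Rightarrow> bool" where
  "valid_platform S M \<longleftrightarrow> (\<forall>s\<in>S. M s \<ge> 1)"

definition is_path :: "'v set \<Rightarrow> ('v \<times> 'v) set \<Rightarrow> 'v list \<Rightarrow> bool" where
  "is_path V E p \<longleftrightarrow> p \<noteq> [] \<and> set p \<subseteq> V \<and>
     (\<forall>i. Suc i < length p \<longrightarrow> (p ! i, p ! Suc i) \<in> E)"

definition path_weight :: "('v \<Rightarrow> real) \<Rightarrow> 'v list \<Rightarrow> real" where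
  "path_weight w p = sum_list (map w p)"

definition len :: "'v set \<Rightarrow> ('v \<times> 'v) set \<Rightarrow> ('v \<Rightarrow> real) \<Rightarrow> real" where
  "len V E w = Max (path_weight w ` {p. is_path V E p})"

definition vol :: "'v set \<Rightarrow> ('v \<Rightarrow> 's) \<Rightarrow> ('v \<Rightarrow> real) \<Rightarrow> 's \<Rightarrow> real" where
  "vol V \<gamma> c s = (\<Sum>u\<in>{u\<in>V. \<gamma> u = s}. c u)"

definition scaled_wcet :: "('v \<Rightarrow> 's) \<Rightarrow> ('v \<Rightarrow> real) \<Rightarrow> ('s \<Rightarrow> nat) \<Rightarrow> 'v \<Rightarrow> real" where
  "scaled_wcet \<gamma> c M v = c v * (1 - 1 / real (M (\<gamma> v)))"

definition B1 ::
  "'v set \<Rightarrow> ('v \<times> 'v) set \<Rightarrow> 's set \<Rightarrow> ('v \<Rightarrow> 's) \<Rightarrow> ('v \<Rightarrow> real) \<Rightarrow> ('s \<Rightarrow> nat) \<Rightarrow> real" where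
  "B1 V E S \<gamma> c M = len V E (scaled_wcet \<gamma> c M) + (\<Sum>s\<in>S. vol V \<gamma> c s / real (M s))"

end

theory Submission
  imports Defs
begin

lemma path_trancl:
  assumes "is_path V E p" "i < j" "j < length p"
  shows "(p ! i, p ! j) \<in> E\<^sup>+"
  using assms(2,3)
proof (induction j)
  case 0 then show ?case by simp
next
  case (Suc j)
  have e: "(p ! j, p ! Suc j) \<in> E" using assms(1) Suc.prems unfolding is_path_def by blast
  show ?case
  proof (cases "i = j")
    case True then show ?thesis using e by auto
  next
    case False
    then have "(p ! i, p ! j) \<in> E\<^sup>+" using Suc by auto
    then show ?thesis using e by (meson trancl.trancl_into_trancl)
  qed
qed

lemma path_distinct:
  assumes "acyclic E" "is_path V E p"
  shows "distinct p"
proof -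
  have "p ! i \<noteq> p ! j" if "i < j" "j < length p" for i j
    using path_trancl[OF assms(2) that] assms(1) unfolding acyclic_def by auto
  then show ?thesis unfolding distinct_conv_nth
    by (metis nat_neq_iff)
qed

lemma paths_finite:
  assumes "finite V" "acyclic E"
  shows "finite {p. is_path V E p}"
proof -
  have "{p. is_path V E p} \<subseteq> {p. set p \<subseteq> V \<and> length p \<le> card V}"
  proof
    fix p assume "p \<in> {p. is_path V E p}"
    then have P: "is_path V E p" by simp
    then have d: "distinct p" using path_distinct assms by blast
    have s: "set p \<subseteq> V" using P unfolding is_path_def by blast
    have "length p = card (set p)" using d by (simp add: distinct_card)
    also have "\<dots> \<le> card V" using s assms(1) card_mono by blast
    finally show "p \<in> {p. set p \<subseteq> V \<and> length p \<le> card V}" using s by simp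
  qed
  moreover have "finite {p. set p \<subseteq> V \<and> length p \<le> card V}"
    using finite_lists_length_le[OF assms(1)] by simp
  ultimately show ?thesis by (rule finite_subset)
qed

theorem corollary2:
  fixes V :: "'v set" and E :: "('v \<times> 'v) set" and S :: "'s set"
    and \<gamma> :: "'v \<Rightarrow> 's" and c :: "'v \<Rightarrow> real" and M M' :: "'s \<Rightarrow> nat" and s :: 's
  assumes "typed_dag_task V E S \<gamma> c"
    and "valid_platform S M"
    and "s \<in> S"
    and "M s \<le> M' s"
    and "\<forall>t. t \<noteq> s \<longrightarrow> M' t = M t"
  shows "B1 V E S \<gamma> c M' \<le> B1 V E S \<gamma> c M"
proof -
  have fV: "finite V" and ac: "acyclic E" and cnn: "\<forall>v\<in>V. c v \<ge> 0" and fS: "finite S"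
    using assms(1) unfolding typed_dag_task_def by auto
  obtain v0 where v0: "is_source V E v0" using assms(1) unfolding typed_dag_task_def by blast
  have "is_path V E [v0]" using v0 unfolding is_path_def is_source_def by auto
  then have ne: "{p. is_path V E p} \<noteq> {}" by blast
  have fin: "finite {p. is_path V E p}" using paths_finite fV ac by blast
  have m1: "M s \<ge> 1" using assms(2,3) unfolding valid_platform_def by blast
  define \<delta> where "\<delta> = 1 / real (M s) - 1 / real (M' s)"
  have \<delta>0: "\<delta> \<ge> 0" unfolding \<delta>_def using m1 assms(4)
    by (simp add: frac_le)
  define w where "w = scaled_wcet \<gamma> c M"
  define w' where "w' = scaled_wcet \<gamma> c M'"
  define d where "d = vol V \<gamma> c s * \<delta>"
  have diff: "w' v = w v + (if \<gamma> v = s then c v * \<delta> else 0)" for v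
    using assms(5) unfolding w_def w'_def scaled_wcet_def \<delta>_def
    by (auto simp: algebra_simps)
  have pbound: "path_weight w' p \<le> len V E w + d" if P: "is_path V E p" for p
  proof -
    have dp: "distinct p" using path_distinct ac P by blast
    have sp: "set p \<subseteq> V" using P unfolding is_path_def by blast
    have "path_weight w' p = (\<Sum>v\<in>set p. w' v)"
      unfolding path_weight_def using dp by (simp add: sum_list_distinct_conv_sum_set)
    also have "\<dots> = (\<Sum>v\<in>set p. w v) + (\<Sum>v\<in>set p. (if \<gamma> v = s then c v * \<delta> else 0))"
      by (simp add: diff sum.distrib)
    also have "(\<Sum>v\<in>set p. w v) = path_weight w p"
      unfolding path_weight_def using dp by (simp add: sum_list_distinct_conv_sum_set)
    also have "path_weight w p \<le> len V E w"
      unfolding len_def using fin P by (intro Max_ge) auto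
    also have "(\<Sum>v\<in>set p. (if \<gamma> v = s then c v * \<delta> else 0)) = (\<Sum>v\<in>set p \<inter> {u. \<gamma> u = s}. c v * \<delta>)"
      by (simp add: sum.inter_restrict)
    also have "\<dots> \<le> (\<Sum>v\<in>{u\<in>V. \<gamma> u = s}. c v * \<delta>)"
      using sp fV cnn \<delta>0 by (intro sum_mono2) auto
    also have "\<dots> = d" unfolding d_def vol_def by (simp add: sum_distrib_right)
    finally show ?thesis by simp
  qed
  have lenb: "len V E w' \<le> len V E w + d"
    unfolding len_def[of V E w'] using fin ne pbound by (subst Max_le_iff) auto
  have sums: "(\<Sum>t\<in>S. vol V \<gamma> c t / real (M' t)) = (\<Sum>t\<in>S. vol V \<gamma> c t / real (M t)) - d"
  proof -
    have "(\<Sum>t\<in>S. vol V \<gamma> c t / real (M' t)) = vol V \<gamma> c s / real (M' s) + (\<Sum>t\<in>S - {s}. vol V \<gamma> c t / real (M' t))"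
      using fS assms(3) by (simp add: sum.remove)
    also have "(\<Sum>t\<in>S - {s}. vol V \<gamma> c t / real (M' t)) = (\<Sum>t\<in>S - {s}. vol V \<gamma> c t / real (M t))"
      using assms(5) by (intro sum.cong) auto
    also have "(\<Sum>t\<in>S. vol V \<gamma> c t / real (M t)) = vol V \<gamma> c s / real (M s) + (\<Sum>t\<in>S - {s}. vol V \<gamma> c t / real (M t))"
      using fS assms(3) by (simp add: sum.remove)
    ultimately show ?thesis unfolding d_def \<delta>_def by (simp add: algebra_simps)
  qed
  show ?thesis unfolding B1_def using lenb sums unfolding w_def w'_def by linarith
qed

end
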